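(* Let $G=(V,E)$ be a graph and $\mathbb{F}$ a field. Suppose there exist a proper coloring $c:V\to[m]$ of $G$ with locality $\ell$ and $m$ vectors in $\mathbb{F}^t$ such that every $\ell$ of them are linearly independent over $\mathbb{F}$. Then $\mathrm{minrk}_{\mathbb{F}}(\overline{G})\le t$.
   Context: $\overline{G}$ is the complement of $G$. The locality of a proper coloring is the maximum over vertices $v$ of the number of distinct colors on $\{v\}\cup N(v)$. For a graph $H$ on $[n]$, a matrix $M\in\mathbb{F}^{n\times n}$ represents $H$ if $M_{i,i}\ne0$ for all $i$ and $M_{i,j}=0$ for distinct non-adjacent $i,j$; $\mathrm{minrk}_{\mathbb{F}}(H)$ is the minimum rank of such a matrix. *)

theory Defs
  imports "Jordan_Normal_Form.DL_Rank"
begin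

definition is_graph :: "nat \<Rightarrow> (nat \<Rightarrow> nat \<Rightarrow> bool) \<Rightarrow> bool" where
  "is_graph n E \<longleftrightarrow> (\<forall>i j. E i j \<longrightarrow> i < n \<and> j < n \<and> i \<noteq> j \<and> E j i)"

definition complement_graph :: "nat \<Rightarrow> (nat \<Rightarrow> nat \<Rightarrow> bool) \<Rightarrow> (nat \<Rightarrow> nat \<Rightarrow> bool)" where
  "complement_graph n E = (\<lambda>i j. i < n \<and> j < n \<and> i \<noteq> j \<and> \<not> E i j)"

definition nbhd :: "nat \<Rightarrow> (nat \<Rightarrow> nat \<Rightarrow> bool) \<Rightarrow> nat \<Rightarrow> nat set" where
  "nbhd n E v = {u. u < n \<and> E v u}"

definition proper_coloring :: "nat \<Rightarrow> (nat \<Rightarrow> nat \<Rightarrow> bool) \<Rightarrow> nat \<Rightarrow> (nat \<Rightarrow> nat) \<Rightarrow> bool" where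
  "proper_coloring n E m c \<longleftrightarrow> (\<forall>v<n. c v < m) \<and> (\<forall>u<n. \<forall>v<n. E u v \<longrightarrow> c u \<noteq> c v)"

definition locality :: "nat \<Rightarrow> (nat \<Rightarrow> nat \<Rightarrow> bool) \<Rightarrow> (nat \<Rightarrow> nat) \<Rightarrow> nat" where
  "locality n E c = Max ((\<lambda>v. card (c ` ({v} \<union> nbhd n E v))) ` {0..<n})"

definition lin_indep_family :: "nat \<Rightarrow> (nat \<Rightarrow> 'a::field vec) \<Rightarrow> nat set \<Rightarrow> bool" where
  "lin_indep_family t u S \<longleftrightarrow>
     (\<forall>a :: nat \<Rightarrow> 'a. (\<forall>k<t. (\<Sum>i\<in>S. a i * (u i $ k)) = 0) \<longrightarrow> (\<forall>i\<in>S. a i = 0))"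

definition represents :: "nat \<Rightarrow> (nat \<Rightarrow> nat \<Rightarrow> bool) \<Rightarrow> 'a::field mat \<Rightarrow> bool" where
  "represents n H M \<longleftrightarrow> M \<in> carrier_mat n n \<and> (\<forall>i<n. M $$ (i, i) \<noteq> 0) \<and>
     (\<forall>i<n. \<forall>j<n. i \<noteq> j \<and> \<not> H i j \<longrightarrow> M $$ (i, j) = 0)"

definition minrk :: "'a::field itself \<Rightarrow> nat \<Rightarrow> (nat \<Rightarrow> nat \<Rightarrow> bool) \<Rightarrow> nat" where
  "minrk _ n H = Min {vec_space.rank n M | M :: 'a mat. represents n H M}"

end

theory Submission imports Defs "HOL-Library.Function_Algebras" begin

lemma sum_fun_apply': "(\<Sum>x\<in>A. f x) k = (\<Sum>x\<in>A. f x k)"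
  by (induct A rule: infinite_finite_induct) auto

lemma key_functional:
  fixes w :: "nat \<Rightarrow> nat \<Rightarrow> 'a::field"
  assumes fin: "finite K" and i: "i \<in> K"
   and ind: "\<forall>a. (\<forall>k<t. (\<Sum>j\<in>K. a j * w j k) = 0) \<longrightarrow> (\<forall>j\<in>K. a j = 0)"
  shows "\<exists>y. (\<Sum>k<t. y k * w i k) \<noteq> 0 \<and> (\<forall>j\<in>K-{i}. (\<Sum>k<t. y k * w j k) = 0)"
proof -
  define W where "W j = (\<lambda>k. if k<t then w j k else 0)" for j
  define s1 where "s1 = (\<lambda>c (f::nat\<Rightarrow>'a) x. c * f x)"
  interpret vs: vector_space_pair s1 "((*)::'a\<Rightarrow>'a\<Rightarrow>'a)"
    by unfold_locales (auto simp: s1_def algebra_simps fun_eq_iff)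
  have inj: "inj_on W K"
  proof (rule inj_onI, rule ccontr)
    fix a b assume ab: "a \<in> K" "b \<in> K" "W a = W b" "a \<noteq> b"
    define c where "c j = (if j = a then 1 else if j = b then -1 else (0::'a))" for j
    have "\<forall>k<t. (\<Sum>j\<in>K. c j * w j k) = 0"
    proof (intro allI impI)
      fix k assume k: "k < t"
      have wab: "w a k = w b k" using fun_cong[OF ab(3), of k] k by (simp add: W_def)
      have "(\<Sum>j\<in>K. c j * w j k) = (\<Sum>j\<in>{a,b}. c j * w j k)"
        by (rule sum.mono_neutral_right) (use fin ab in \<open>auto simp: c_def\<close>)
      also have "\<dots> = 0" using ab(4) wab by (simp add: c_def)
      finally show "(\<Sum>j\<in>K. c j * w j k) = 0" .
    qed
    then have "c a = 0" using ind ab by blast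
    then show False by (simp add: c_def)
  qed
  have indep: "vs.vs1.independent (W ` K)"
  proof (rule vs.vs1.independent_if_scalars_zero)
    show "finite (W ` K)" using fin by simp
    fix f x assume sum0: "(\<Sum>x\<in>W ` K. s1 (f x) x) = 0" and x: "x \<in> W ` K"
    have "(\<Sum>j\<in>K. s1 (f (W j)) (W j)) = 0" using sum0 by (simp add: sum.reindex[OF inj])
    then have "\<forall>k<t. (\<Sum>j\<in>K. f (W j) * w j k) = 0"
    proof (intro allI impI)
      fix k assume k: "k < t" and h: "(\<Sum>j\<in>K. s1 (f (W j)) (W j)) = 0"
      have "(\<Sum>j\<in>K. s1 (f (W j)) (W j)) k = 0" using h by simp
      then show "(\<Sum>j\<in>K. f (W j) * w j k) = 0" using k by (simp add: sum_fun_apply' s1_def W_def)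
    qed
    then have "\<forall>j\<in>K. f (W j) = 0" using ind[rule_format, of "\<lambda>j. f (W j)"] by blast
    then show "f x = 0" using x by blast
  qed
  obtain g where lg: "Vector_Spaces.linear s1 (*) g" and gW: "\<forall>x\<in>W ` K. g x = (if x = W i then 1 else 0)"
    using vs.linear_independent_extend[OF indep, of "\<lambda>x. if x = W i then 1 else 0"] by blast
  interpret g: Vector_Spaces.linear s1 "(*)" g by (rule lg)
  define y where "y k = g (\<lambda>k'. if k' = k then 1 else 0)" for k
  have gWj: "g (W j) = (\<Sum>k<t. y k * w j k)" for j
  proof -
    have "W j = (\<Sum>k<t. s1 (w j k) (\<lambda>k'. if k' = k then 1 else 0))"
    proof
      fix x
      have "(\<Sum>k<t. s1 (w j k) (\<lambda>k'. if k' = k then 1 else 0)) x = (\<Sum>k<t. if x = k then w j k else 0)"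
        unfolding sum_fun_apply' s1_def by (rule sum.cong) auto
      also have "\<dots> = W j x" by (simp add: W_def)
      finally show "W j x = (\<Sum>k<t. s1 (w j k) (\<lambda>k'. if k' = k then 1 else 0)) x" by simp
    qed
    then have "g (W j) = (\<Sum>k<t. w j k * y k)"
      by (simp add: g.sum g.scale y_def)
    then show ?thesis by (simp add: mult.commute)
  qed
  show ?thesis
  proof (intro exI conjI ballI)
    show "(\<Sum>k<t. y k * w i k) \<noteq> 0" using gW i gWj[of i] by auto
    fix j assume j: "j \<in> K - {i}"
    then have "W j \<noteq> W i" using inj i by (auto dest: inj_onD)
    then show "(\<Sum>k<t. y k * w j k) = 0" using gW j gWj[of j] by auto
  qed
qed

lemma rank_sum_products:
  fixes Y X :: "nat \<Rightarrow> nat \<Rightarrow> 'a::field"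
  shows "vec_space.rank n (mat n n (\<lambda>(r,cc). \<Sum>k<s. Y r k * X k cc)) \<le> s"
proof (induction s)
  case 0
  have "mat n n (\<lambda>(r,cc). \<Sum>k<0. Y r k * X k cc) = (0\<^sub>m n n :: 'a mat)"
    by (rule eq_matI) auto
  then show ?case by (simp only: vec_space.rank_0I le_refl)
next
  case (Suc s)
  let ?A = "mat n n (\<lambda>(r,cc). \<Sum>k<s. Y r k * X k cc) :: 'a mat"
  let ?B = "mat n n (\<lambda>(r,cc). Y r s * X s cc) :: 'a mat"
  have eq: "mat n n (\<lambda>(r,cc). \<Sum>k<Suc s. Y r k * X k cc) = ?A + ?B"
    by (rule eq_matI) auto
  have "vec_space.rank n ?B \<le> 1"
    by (rule vec_space.rank_le_1_product_entries[of _ n n "\<lambda>r. Y r s" "\<lambda>cc. X s cc"]) auto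
  moreover have "vec_space.rank n (?A + ?B) \<le> vec_space.rank n ?A + vec_space.rank n ?B"
    by (rule vec_space.rank_subadditive) auto
  ultimately show ?case using Suc.IH eq by simp
qed


theorem mainTheorem10:
  fixes n m t l :: nat and E :: "nat \<Rightarrow> nat \<Rightarrow> bool" and c :: "nat \<Rightarrow> nat"
    and u :: "nat \<Rightarrow> 'a::field vec"
  assumes "is_graph n E"
    and "proper_coloring n E m c"
    and "locality n E c = l"
    and "\<forall>i<m. u i \<in> carrier_vec t"
    and "\<forall>S. S \<subseteq> {0..<m} \<and> card S = l \<longrightarrow> lin_indep_family t u S"
  shows "minrk TYPE('a) n (complement_graph n E) \<le> t"
proof -
  note pc = assms(2)[unfolded proper_coloring_def]
  define K where "K v = c ` ({v} \<union> nbhd n E v)" for v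
  have Ksub: "K v \<subseteq> {0..<m}" if "v < n" for v
    using that pc by (auto simp: K_def nbhd_def)
  have Kfin: "finite (K v)" for v by (simp add: K_def nbhd_def)
  have Kle: "card (K v) \<le> l" if "v < n" for v
  proof -
    have "card (K v) \<in> (\<lambda>v. card (c ` ({v} \<union> nbhd n E v))) ` {0..<n}" using that by (auto simp: K_def)
    then show ?thesis using assms(3) unfolding locality_def using Max_ge[of "(\<lambda>v. card (c ` ({v} \<union> nbhd n E v))) ` {0..<n}"] by auto
  qed
  have lm: "l \<le> m" if "v < n" for v
  proof -
    have "(\<lambda>v. card (c ` ({v} \<union> nbhd n E v))) ` {0..<n} \<noteq> {}" using that by auto
    then have "l \<in> (\<lambda>v. card (c ` ({v} \<union> nbhd n E v))) ` {0..<n}"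
      using assms(3) Max_in[of "(\<lambda>v. card (c ` ({v} \<union> nbhd n E v))) ` {0..<n}"] unfolding locality_def by auto
    then obtain w where w: "w < n" "l = card (K w)" by (auto simp: K_def)
    then show ?thesis using card_mono[OF _ Ksub[OF w(1)]] by simp
  qed
  have indK: "\<forall>a. (\<forall>k<t. (\<Sum>j\<in>K v. a j * (u j $ k)) = 0) \<longrightarrow> (\<forall>j\<in>K v. a j = 0)"
    if v: "v < n" for v
  proof -
    have "l - card (K v) \<le> card ({0..<m} - K v)"
      using lm[OF v] Ksub[OF v] by (simp add: card_Diff_subset Kfin)
    then obtain T where T: "T \<subseteq> {0..<m} - K v" "card T = l - card (K v)" "finite T"
      by (rule obtain_subset_with_card_n)
    define S where "S = K v \<union> T"
    have S: "S \<subseteq> {0..<m}" "card S = l" "K v \<subseteq> S" "finite S"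
    proof -
      have "K v \<inter> T = {}" using T by auto
      then have "card S = card (K v) + card T" unfolding S_def using T Kfin by (simp add: card_Un_disjoint)
      then show "S \<subseteq> {0..<m}" "card S = l" "K v \<subseteq> S" "finite S" using T Ksub[OF v] Kle[OF v] Kfin by (auto simp: S_def)
    qed
    have li: "lin_indep_family t u S" using assms(5) S by blast
    show ?thesis
    proof (intro allI impI ballI)
      fix a j assume h: "\<forall>k<t. (\<Sum>j\<in>K v. a j * (u j $ k)) = 0" and j: "j \<in> K v"
      define a' where "a' i = (if i \<in> K v then a i else 0)" for i
      have "\<forall>k<t. (\<Sum>i\<in>S. a' i * (u i $ k)) = 0"
      proof (intro allI impI)
        fix k assume k: "k < t"
        have "(\<Sum>i\<in>S. a' i * (u i $ k)) = (\<Sum>i\<in>K v. a' i * (u i $ k))"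
          by (rule sum.mono_neutral_right) (use S in \<open>auto simp: a'_def\<close>)
        also have "\<dots> = (\<Sum>i\<in>K v. a i * (u i $ k))" by (rule sum.cong) (auto simp: a'_def)
        finally show "(\<Sum>i\<in>S. a' i * (u i $ k)) = 0" using h k by simp
      qed
      then have "a' j = 0" using li j S unfolding lin_indep_family_def by blast
      then show "a j = 0" using j by (simp add: a'_def)
    qed
  qed
  have "\<forall>v. \<exists>y. v < n \<longrightarrow> (\<Sum>k<t. y k * (u (c v) $ k)) \<noteq> 0 \<and>
          (\<forall>j\<in>K v - {c v}. (\<Sum>k<t. y k * (u j $ k)) = 0)"
  proof
    fix v
    show "\<exists>y. v < n \<longrightarrow> (\<Sum>k<t. y k * (u (c v) $ k)) \<noteq> 0 \<and>
          (\<forall>j\<in>K v - {c v}. (\<Sum>k<t. y k * (u j $ k)) = 0)"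
    proof (cases "v < n")
      case True
      have "c v \<in> K v" by (simp add: K_def)
      then show ?thesis
        using key_functional[OF Kfin _ indK[OF True], of "c v"] by blast
    qed simp
  qed
  then obtain Y where Y: "\<And>v. v < n \<Longrightarrow> (\<Sum>k<t. Y v k * (u (c v) $ k)) \<noteq> 0 \<and>
          (\<forall>j\<in>K v - {c v}. (\<Sum>k<t. Y v k * (u j $ k)) = 0)"
    by metis
  define M :: "'a mat" where "M = mat n n (\<lambda>(r,cc). \<Sum>k<t. Y r k * (\<lambda>k cc. u (c cc) $ k) k cc)"
  have rk: "vec_space.rank n M \<le> t" unfolding M_def by (rule rank_sum_products)
  have rep: "represents n (complement_graph n E) M"
    unfolding represents_def
  proof (intro conjI allI impI)
    show "M \<in> carrier_mat n n" by (simp add: M_def)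
    fix i assume i: "i < n"
    show "M $$ (i, i) \<noteq> 0" using Y[OF i] i by (simp add: M_def)
    fix j assume j: "j < n" and h: "i \<noteq> j \<and> \<not> complement_graph n E i j"
    then have E: "E i j" using i by (auto simp: complement_graph_def)
    have "c i \<noteq> c j" using pc[THEN conjunct2] E i j by simp
    then have "c j \<noteq> c i" by simp
    then have "c j \<in> K i - {c i}" using E j by (auto simp: K_def nbhd_def)
    then show "M $$ (i, j) = 0" using Y[OF i] i j by (simp add: M_def)
  qed
  have fin: "finite {vec_space.rank n M | M :: 'a mat. represents n (complement_graph n E) M}"
  proof (rule finite_subset[of _ "{0..n}"])
    show "{vec_space.rank n M | M :: 'a mat. represents n (complement_graph n E) M} \<subseteq> {0..n}"
    proof
      fix x assume "x \<in> {vec_space.rank n M | M :: 'a mat. represents n (complement_graph n E) M}"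
      then obtain M' :: "'a mat" where "x = vec_space.rank n M'" "M' \<in> carrier_mat n n"
        unfolding represents_def by blast
      then show "x \<in> {0..n}" using vec_space.rank_le_nc[of M' n n] by simp
    qed
  qed simp
  have "minrk TYPE('a) n (complement_graph n E) \<le> vec_space.rank n M"
    unfolding minrk_def using rep fin by (intro Min_le) auto
  then show ?thesis using rk by simp
qed

end
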